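(* Let $V$ be a finite-dimensional real $\mathbb Z/3$-representation and $n\ge0$ an integer. Then $V$ has a $\mathbb Z/3$-invariant basis up to sign if and only if $V\oplus n\mathbf 3$ does.
   Context: $\mathbf 3$ denotes the regular representation of $\mathbb Z/3$ ($\mathbb R^3$ with cyclic permutation of coordinates), $n\mathbf 3$ the direct sum of $n$ copies. A basis is invariant up to sign if every group element maps each basis element to plus or minus a basis element. *)

theory Defs
  imports "HOL-Analysis.Analysis" "HOL-Library.Numeral_Type"
begin

text \<open>A real Z/3-representation is given by a linear map T with T^3 = id (the action
of the generator).\<close>

definition Z3_inv_basis_up_to_sign :: "'a::real_vector set \<Rightarrow> ('a \<Rightarrow> 'a) \<Rightarrow> bool" where
  "Z3_inv_basis_up_to_sign S T \<longleftrightarrow>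
     (\<exists>B. B \<subseteq> S \<and> independent B \<and> span B = S \<and>
          (\<forall>k<(3::nat). \<forall>b\<in>B. (T ^^ k) b \<in> B \<union> uminus ` B))"

text \<open>The regular representation 3: R^3 with cyclic permutation of coordinates.\<close>
definition cyc3 :: "real^3 \<Rightarrow> real^3" where
  "cyc3 x = (\<chi> i. x $ (i + 1))"

text \<open>n copies of 3, realised as the vectors of real^3^'m supported on an index set J
with card J = n (J may be empty).\<close>
definition reg_copies :: "'m::finite set \<Rightarrow> (real^3^'m) set" where
  "reg_copies J = {x. \<forall>j. j \<notin> J \<longrightarrow> x $ j = 0}"

definition sum_action :: "('v \<Rightarrow> 'v) \<Rightarrow> ('v \<times> (real^3^'m)) \<Rightarrow> ('v \<times> (real^3^'m))" where
  "sum_action T p = (T (fst p), (\<chi> j. cyc3 (snd p $ j)))"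

end

theory Submission
  imports Defs
begin

lemma neg_self: "(x::'a::real_vector) = - x \<Longrightarrow> x = 0"
proof -
  assume h: "x = - x"
  then have "x + x = 0" by (metis add.right_inverse)
  then have "(2::real) *\<^sub>R x = 0" by (simp add: scaleR_2)
  then show ?thesis by simp
qed

lemma orbit_reps:
  "finite A \<Longrightarrow> f ` A \<subseteq> A \<Longrightarrow> (\<forall>a\<in>A. f (f (f a)) = a) \<Longrightarrow> (\<forall>a\<in>A. f a \<noteq> a) \<Longrightarrow> card A = n \<Longrightarrow>
   \<exists>R \<subseteq> A. A \<subseteq> R \<union> f ` R \<union> f ` f ` R \<and> 3 * card R \<le> card A"
proof (induction n arbitrary: A rule: less_induct)
  case (less n A)
  show ?case
  proof (cases "A = {}")
    case True then show ?thesis by auto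
  next
    case False
    then obtain a where a: "a \<in> A" by blast
    have fa: "f a \<in> A" "f (f a) \<in> A" using a less.prems(2) by auto
    have d1: "f a \<noteq> a" using a less.prems(4) by blast
    have d2: "f (f a) \<noteq> f a" using fa less.prems(4) by blast
    have d3: "f (f a) \<noteq> a"
    proof
      assume "f (f a) = a"
      then have "f (f (f a)) = f a" by simp
      then show False using less.prems(3) a d1 by auto
    qed
    define Ob where "Ob = {a, f a, f (f a)}"
    define A' where "A' = A - Ob"
    have OA: "Ob \<subseteq> A" unfolding Ob_def using a fa by auto
    have cO: "card Ob = 3" unfolding Ob_def using d1 d2 d3 by auto
    have cA': "card A' = card A - 3" unfolding A'_def using card_Diff_subset[OF _ OA] cO
      by (metis Ob_def finite.emptyI finite.insertI)
    have fA': "f ` A' \<subseteq> A'"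
    proof
      fix y assume "y \<in> f ` A'"
      then obtain x where x: "x \<in> A'" "y = f x" by blast
      have xA: "x \<in> A" "x \<notin> Ob" using x unfolding A'_def by auto
      have x3: "f (f (f x)) = x" using less.prems(3) xA by blast
      have a3: "f (f (f a)) = a" using less.prems(3) a by blast
      have "f x \<notin> Ob"
      proof
        assume "f x \<in> Ob"
        then have "f x = a \<or> f x = f a \<or> f x = f (f a)" unfolding Ob_def by blast
        then have "x = f (f a) \<or> x = a \<or> x = f a"
        proof (elim disjE)
          assume "f x = a" then have "f (f (f x)) = f (f a)" by simp
          then show ?thesis using x3 by simp
        next
          assume "f x = f a" then have "f (f (f x)) = f (f (f a))" by simp
          then show ?thesis using x3 a3 by simp
        next
          assume "f x = f (f a)" then have "f (f (f x)) = f (f (f (f a)))" by simp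
          then show ?thesis using x3 a3 by simp
        qed
        then show False using xA(2) unfolding Ob_def by blast
      qed
      moreover have "f x \<in> A" using less.prems(2) xA(1) by blast
      ultimately show "y \<in> A'" using x(2) unfolding A'_def by blast
    qed
    have cOA: "card Ob \<le> card A" using card_mono[OF less.prems(1) OA] .
    have lt: "card A' < n" using cA' less.prems(5) cOA cO by linarith
    have fin': "finite A'" using less.prems(1) unfolding A'_def by simp
    have h3: "\<forall>a\<in>A'. f (f (f a)) = a" using less.prems(3) unfolding A'_def by blast
    have h4: "\<forall>a\<in>A'. f a \<noteq> a" using less.prems(4) unfolding A'_def by blast
    obtain R' where R': "R' \<subseteq> A'" "A' \<subseteq> R' \<union> f ` R' \<union> f ` f ` R'" "3 * card R' \<le> card A'"
      using less.IH[OF lt fin' fA' h3 h4 refl] by blast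
    have fR': "finite R'" using R'(1) less.prems(1) unfolding A'_def by (meson finite_Diff finite_subset)
    show ?thesis
    proof (intro exI[of _ "insert a R'"] conjI)
      show "insert a R' \<subseteq> A" using a R'(1) unfolding A'_def by auto
      show "A \<subseteq> insert a R' \<union> f ` insert a R' \<union> f ` f ` insert a R'"
      proof
        fix y assume y: "y \<in> A"
        show "y \<in> insert a R' \<union> f ` insert a R' \<union> f ` f ` insert a R'"
        proof (cases "y \<in> Ob")
          case True
          then have "y = a \<or> y = f a \<or> y = f (f a)" unfolding Ob_def by blast
          then show ?thesis by blast
        next
          case False
          then have "y \<in> A'" using y unfolding A'_def by blast
          then have "y \<in> R' \<union> f ` R' \<union> f ` f ` R'" using R'(2) by blast
          then show ?thesis by blast
        qed
      qed
      have "card (insert a R') \<le> card R' + 1" using fR' by (simp add: card_insert_if)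
      then show "3 * card (insert a R') \<le> card A" using R'(3) cA' cO cOA
        by linarith
    qed
  qed
qed

locale z3rep =
  fixes S :: "'a::euclidean_space set" and T :: "'a \<Rightarrow> 'a"
  assumes subS: "subspace S" and linT: "linear T"
    and TS: "\<And>v. v \<in> S \<Longrightarrow> T v \<in> S"
    and T3: "\<And>v. v \<in> S \<Longrightarrow> T (T (T v)) = v"
begin

definition "FF = {v\<in>S. T v = v}"
definition "WW = {v\<in>S. v + T v + T (T v) = 0}"
definition "PP v = (1/3) *\<^sub>R (v + T v + T (T v))"
definition "QQ v = v - PP v"

lemmas Tlin = linear_add[OF linT] linear_scale[OF linT] linear_neg[OF linT] linear_diff[OF linT] linear_0[OF linT]

lemma linPP: "linear PP"
  unfolding PP_def by (intro linearI) (simp_all add: Tlin algebra_simps)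

lemma linQQ: "linear QQ"
  unfolding QQ_def using linPP by (intro linearI) (simp_all add: linear_add linear_scale algebra_simps)

lemma subFF: "subspace FF"
  unfolding FF_def subspace_def using subS
  by (auto simp: Tlin subspace_def)

lemma subWW: "subspace WW"
proof -
  have e1: "(x+y) + T(x+y) + T(T(x+y)) = (x + T x + T (T x)) + (y + T y + T (T y))" for x y
    by (simp add: Tlin algebra_simps)
  have e2: "(c *\<^sub>R x) + T(c *\<^sub>R x) + T(T(c *\<^sub>R x)) = c *\<^sub>R (x + T x + T (T x))" for c x
    by (simp add: Tlin algebra_simps)
  show ?thesis unfolding subspace_def
  proof (intro conjI ballI allI)
    show "0 \<in> WW" unfolding WW_def using subS by (simp add: Tlin subspace_0)
    fix x y assume "x \<in> WW" "y \<in> WW"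
    then show "x + y \<in> WW" unfolding WW_def using subS e1[of x y] by (simp add: subspace_add)
  next
    fix c x assume "x \<in> WW"
    then show "c *\<^sub>R x \<in> WW" unfolding WW_def using subS e2[of c x] by (simp add: subspace_scale)
  qed
qed

lemma three: "x + x + x = (3::real) *\<^sub>R (x::'a)"
proof -
  show ?thesis using scaleR_add_left[of 2 1 x] by (simp add: scaleR_2)
qed

lemma PP3: "PP v + PP v + PP v = v + T v + T (T v)"
  unfolding PP_def three by simp

lemma TPP: "v \<in> S \<Longrightarrow> T (PP v) = PP v"
  unfolding PP_def using T3 by (simp add: Tlin algebra_simps)

lemma FF_S: "FF \<subseteq> S" and WW_S: "WW \<subseteq> S" unfolding FF_def WW_def by auto

lemma PP_S: "v \<in> S \<Longrightarrow> PP v \<in> S"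
proof -
  assume v: "v \<in> S"
  have "T (T v) \<in> S" using TS v by blast
  then show ?thesis unfolding PP_def using subS TS v
    by (simp add: subspace_diff subspace_scale subspace_add)
qed

lemma PP_FF: "v \<in> S \<Longrightarrow> PP v \<in> FF"
  unfolding FF_def using PP_S TPP by blast

lemma QQ_WW: "v \<in> S \<Longrightarrow> QQ v \<in> WW"
proof -
  assume v: "v \<in> S"
  have "T (T v) \<in> S" using TS v by blast
  then have "QQ v \<in> S" unfolding QQ_def PP_def using subS TS v
    by (simp add: subspace_diff subspace_scale subspace_add)
  moreover have "QQ v + T (QQ v) + T (T (QQ v)) = 0"
  proof -
    have "QQ v + T (QQ v) + T (T (QQ v)) = (v + T v + T (T v)) - (PP v + PP v + PP v)"
      unfolding QQ_def using TPP[OF v] by (simp add: Tlin algebra_simps)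
    then show ?thesis by (simp add: PP3)
  qed
  ultimately show ?thesis unfolding WW_def by blast
qed

lemma PQ: "v = PP v + QQ v" unfolding QQ_def by simp

lemma FW0: "FF \<inter> WW = {0}"
proof -
  have "v = 0" if "v \<in> FF" "v \<in> WW" for v
  proof -
    have "(3::real) *\<^sub>R v = 0" using that unfolding FF_def WW_def three[symmetric] by auto
    then show ?thesis by simp
  qed
  then show ?thesis using subFF subWW subspace_0 by blast
qed

lemma sumFW: "{x + y |x y. x \<in> FF \<and> y \<in> WW} = S"
proof -
  have "x + y \<in> S" if "x \<in> FF" "y \<in> WW" for x y
    using that FF_S WW_S subS subspace_add by blast
  moreover have "\<exists>x y. v = x + y \<and> x \<in> FF \<and> y \<in> WW" if "v \<in> S" for v
    using PP_FF QQ_WW PQ that by blast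
  ultimately show ?thesis by blast
qed

lemma dimFW: "dim S = dim FF + dim WW"
  using dim_sums_Int[OF subFF subWW] by (simp add: sumFW FW0)

lemma QQ_fix: "v \<in> WW \<Longrightarrow> QQ v = v"
  unfolding WW_def QQ_def PP_def by simp

lemma QQ_orbit: "v \<in> S \<Longrightarrow> QQ v + QQ (T v) + QQ (T (T v)) = 0"
proof -
  assume v: "v \<in> S"
  have "PP (T v) = PP v" "PP (T (T v)) = PP v" unfolding PP_def using T3[OF v] by (simp_all add: algebra_simps)
  then have "QQ v + QQ (T v) + QQ (T (T v)) = (v + T v + T (T v)) - (PP v + PP v + PP v)"
    unfolding QQ_def by (simp add: algebra_simps)
  then show ?thesis by (simp add: PP3)
qed

lemma TW: "v \<in> WW \<Longrightarrow> T v \<in> WW"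
proof -
  assume v: "v \<in> WW"
  then have "v \<in> S" "v + T v + T (T v) = 0" unfolding WW_def by auto
  moreover have "T v + T (T v) + T (T (T v)) = v + T v + T (T v)" using T3[OF \<open>v \<in> S\<close>] by (simp add: add_ac)
  ultimately show ?thesis unfolding WW_def using TS by simp
qed

lemma TTW: "v \<in> WW \<Longrightarrow> T (T v) = - v - T v"
  unfolding WW_def by (auto simp: algebra_simps eq_neg_iff_add_eq_0)

lemma span_T_inv:
  assumes X: "X \<subseteq> WW" and u: "u \<in> span (X \<union> T ` X)"
  shows "T u \<in> span (X \<union> T ` X)"
proof -
  have "T ` (X \<union> T ` X) \<subseteq> span (X \<union> T ` X)"
  proof
    fix y assume "y \<in> T ` (X \<union> T ` X)"
    then obtain x where x: "x \<in> X" and "y = T x \<or> y = T (T x)" by auto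
    moreover have "T x \<in> span (X \<union> T ` X)" "x \<in> span (X \<union> T ` X)" using x by (auto intro: span_base)
    moreover have "T (T x) = - x - T x" using TTW X x by auto
    moreover have "- x - T x \<in> span (X \<union> T ` X)" using calculation(3,4) by (intro span_diff span_neg)
    ultimately show "y \<in> span (X \<union> T ` X)" by metis
  qed
  then have "span (T ` (X \<union> T ` X)) \<subseteq> span (X \<union> T ` X)"
    by (simp add: span_minimal)
  then show ?thesis using u span_linear_image[OF linT] by blast
qed

lemma Tw_notin:
  assumes X: "X \<subseteq> WW" and w: "w \<in> WW" and wn: "w \<notin> span (X \<union> T ` X)"
  shows "T w \<notin> span (insert w (X \<union> T ` X))"
proof
  let ?U = "span (X \<union> T ` X)"
  assume "T w \<in> span (insert w (X \<union> T ` X))"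
  then obtain c where u: "T w - c *\<^sub>R w \<in> ?U" using span_breakdown_eq by blast
  define u where "u = T w - c *\<^sub>R w"
  have uU: "u \<in> ?U" using u u_def by simp
  have TuU: "T u \<in> ?U" using span_T_inv[OF X uU] .
  have eq: "T u + (1 + c) *\<^sub>R u = - (1 + c + c * c) *\<^sub>R w"
    unfolding u_def using TTW[OF w] by (simp add: Tlin algebra_simps)
  have "T u + (1 + c) *\<^sub>R u \<in> ?U" using uU TuU by (simp add: span_add span_scale)
  then have wd: "(- (1 + c + c * c)) *\<^sub>R w \<in> ?U" using eq by simp
  have "1 + c + c * c \<noteq> 0" using zero_le_square[of "2*c+1"] by (simp add: algebra_simps)
  then obtain d where d: "d = - (1 + c + c * c)" "d \<noteq> 0" by simp
  have "inverse d *\<^sub>R (d *\<^sub>R w) \<in> ?U" using wd d(1) by (simp only: span_scale)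
  moreover have "inverse d *\<^sub>R (d *\<^sub>R w) = w" using d(2) by simp
  ultimately have "w \<in> ?U" by simp
  then show False using wn by blast
qed

definition "goodX X \<longleftrightarrow> X \<subseteq> WW \<and> finite X \<and> independent (X \<union> T ` X) \<and> X \<inter> T ` X = {} \<and> inj_on T X"

lemma W_step:
  assumes g: "goodX X" and w: "w \<in> WW" and wn: "w \<notin> span (X \<union> T ` X)"
  shows "goodX (insert w X)" "insert w X \<union> T ` insert w X = insert (T w) (insert w (X \<union> T ` X))"
    "T w \<notin> insert w (X \<union> T ` X)"
proof -
  have X: "X \<subseteq> WW" "finite X" "independent (X \<union> T ` X)" "X \<inter> T ` X = {}" "inj_on T X"
    using g unfolding goodX_def by auto
  have tw: "T w \<notin> span (insert w (X \<union> T ` X))" using Tw_notin[OF X(1) w wn] .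
  then have tw2: "T w \<notin> insert w (X \<union> T ` X)" using span_base[of "T w" "insert w (X \<union> T ` X)"] by blast
  have wA: "w \<notin> X \<union> T ` X" using wn span_base[of w "X \<union> T ` X"] by blast
  show eq: "insert w X \<union> T ` insert w X = insert (T w) (insert w (X \<union> T ` X))" by auto
  show "T w \<notin> insert w (X \<union> T ` X)" by fact
  have "independent (insert w (X \<union> T ` X))" using independent_insertI[OF wn X(3)] .
  then have ind: "independent (insert (T w) (insert w (X \<union> T ` X)))" using independent_insertI[OF tw] by blast
  have d: "insert w X \<inter> T ` insert w X = {}"
  proof -
    have "T ` insert w X = insert (T w) (T ` X)" by simp
    moreover have "w \<noteq> T w" "w \<notin> T ` X" "T w \<notin> X" using tw2 wA by auto
    ultimately show ?thesis using X(4) by blast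
  qed
  have "T w \<notin> T ` (X - {w})" using tw2 by blast
  then have i: "inj_on T (insert w X)"
    using X(5) inj_on_insert by blast
  have s: "insert w X \<subseteq> WW" using X(1) w by blast
  have f: "finite (insert w X)" using X(2) by blast
  have ind2: "independent (insert w X \<union> T ` insert w X)" using ind eq by simp
  show "goodX (insert w X)" unfolding goodX_def
    using s f ind2 d i by blast
qed

lemma W_decomp: "\<exists>X. goodX X \<and> WW \<subseteq> span (X \<union> T ` X)"
proof -
  have "\<And>X. goodX X \<Longrightarrow> dim WW - card (X \<union> T ` X) = m \<Longrightarrow> \<exists>X'. goodX X' \<and> WW \<subseteq> span (X' \<union> T ` X')" for m
  proof (induction m rule: less_induct)
    case (less m X)
    show ?case
    proof (cases "WW \<subseteq> span (X \<union> T ` X)")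
      case True then show ?thesis using less.prems by blast
    next
      case False
      then obtain w where w: "w \<in> WW" "w \<notin> span (X \<union> T ` X)" by blast
      note st = W_step[OF less.prems(1) w]
      have fin: "finite (X \<union> T ` X)" using less.prems(1) unfolding goodX_def by auto
      have c1: "card (insert w X \<union> T ` insert w X) = card (X \<union> T ` X) + 2"
      proof -
        have "w \<notin> X \<union> T ` X" using w(2) span_base[of w "X \<union> T ` X"] by blast
        then show ?thesis unfolding st(2) using st(3) fin by simp
      qed
      have sub: "insert w X \<union> T ` insert w X \<subseteq> WW" using st(1) TW unfolding goodX_def by auto
      have "card (insert w X \<union> T ` insert w X) \<le> dim WW"
        using independent_card_le_dim[OF sub] st(1) unfolding goodX_def by auto
      then have "dim WW - card (insert w X \<union> T ` insert w X) < m" using c1 less.prems(2) by linarith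
      then show ?thesis using less.IH st(1) by blast
    qed
  qed
  moreover have "goodX {}" unfolding goodX_def using independent_empty by simp
  ultimately show ?thesis by blast
qed

lemma card3: "card {a, b, c} \<le> 3"
  by (simp add: card_insert_if)

lemma basis_from_dim:
  assumes dS: "dim S \<le> 3 * dim FF"
  shows "Z3_inv_basis_up_to_sign S T"
proof -
  obtain X where gX: "goodX X" and WX: "WW \<subseteq> span (X \<union> T ` X)" using W_decomp by blast
  have X: "X \<subseteq> WW" "finite X" "independent (X \<union> T ` X)" "X \<inter> T ` X = {}" "inj_on T X"
    using gX unfolding goodX_def by auto
  have cXT: "card (X \<union> T ` X) = 2 * card X"
    using X by (simp add: card_Un_disjoint card_image)
  have "X \<union> T ` X \<subseteq> WW" using X(1) TW by auto
  then have cXW: "2 * card X \<le> dim WW" using independent_card_le_dim X(3) cXT by metis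
  obtain Fb where Fb: "Fb \<subseteq> FF" "independent Fb" "FF \<subseteq> span Fb" "card Fb = dim FF"
    using basis_exists[of FF] by blast
  have fFb: "finite Fb" using Fb(2) finiteI_independent by blast
  have cXF: "card X \<le> card Fb" using cXW dimFW dS Fb(4) by linarith
  obtain g where g: "g ` X \<subseteq> Fb" "inj_on g X" using card_le_inj[OF X(2) fFb cXF] by blast
  have gF: "x \<in> X \<Longrightarrow> g x \<in> FF" for x using g Fb(1) by blast
  have gT: "x \<in> X \<Longrightarrow> T (g x) = g x" for x using gF unfolding FF_def by blast
  have xS: "x \<in> X \<Longrightarrow> x \<in> S" for x using X(1) WW_S by blast
  have xW: "x \<in> X \<Longrightarrow> x + T x + T (T x) = 0" for x using X(1) unfolding WW_def by blast
  define U1 where "U1 = (\<Union>x\<in>X. {g x + x, g x + T x, g x + T (T x)})"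
  define U2 where "U2 = Fb - g ` X"
  define Bn where "Bn = U1 \<union> U2"
  have finBn: "finite Bn" unfolding Bn_def U1_def U2_def using X(2) fFb by simp
  have BnS: "Bn \<subseteq> S"
  proof -
    have "U1 \<subseteq> S"
    proof
      fix y assume "y \<in> U1"
      then obtain x where x: "x \<in> X" and y: "y = g x + x \<or> y = g x + T x \<or> y = g x + T (T x)"
        unfolding U1_def by blast
      have "g x \<in> S" "x \<in> S" "T x \<in> S" "T (T x) \<in> S" using gF[OF x] FF_S xS[OF x] TS by auto
      then show "y \<in> S" using y subS subspace_add by metis
    qed
    moreover have "U2 \<subseteq> S" unfolding U2_def using Fb(1) FF_S by blast
    ultimately show ?thesis unfolding Bn_def by blast
  qed
  have cU1: "card U1 \<le> 3 * card X"
  proof -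
    have "card U1 \<le> (\<Sum>x\<in>X. card {g x + x, g x + T x, g x + T (T x)})"
      unfolding U1_def using X(2) by (rule card_UN_le)
    also have "\<dots> \<le> (\<Sum>x\<in>X. 3)" by (rule sum_mono) (rule card3)
    finally show ?thesis by simp
  qed
  have cU2: "card U2 = card Fb - card X"
    unfolding U2_def using card_Diff_subset[of "g ` X" Fb] g fFb X(2) card_image[OF g(2)]
    by (metis finite_imageI)
  have cBn: "card Bn \<le> dim S"
  proof -
    have "card Bn \<le> card U1 + card U2" unfolding Bn_def by (rule card_Un_le)
    then show ?thesis using cU1 cU2 cXF cXW dimFW Fb(4) by linarith
  qed
  have span1: "g x \<in> span Bn \<and> x \<in> span Bn \<and> T x \<in> span Bn" if x: "x \<in> X" for x
  proof -
    have in1: "g x + x \<in> span Bn" "g x + T x \<in> span Bn" "g x + T (T x) \<in> span Bn"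
      unfolding Bn_def U1_def using x by (auto intro: span_base)
    have "(g x + x) + (g x + T x) + (g x + T (T x)) = (g x + g x + g x) + (x + T x + T (T x))"
      by (simp add: algebra_simps)
    also have "\<dots> = (3::real) *\<^sub>R g x" using xW[OF x] three by simp
    finally have e: "g x = (1/3) *\<^sub>R ((g x + x) + (g x + T x) + (g x + T (T x)))" by simp
    have "(1/3) *\<^sub>R ((g x + x) + (g x + T x) + (g x + T (T x))) \<in> span Bn"
      by (rule span_scale, rule span_add[OF span_add[OF in1(1) in1(2)] in1(3)])
    then have gs: "g x \<in> span Bn" using e by metis
    have "x = (g x + x) - g x" "T x = (g x + T x) - g x" by simp_all
    then show ?thesis using gs in1 span_diff by metis
  qed
  have FbB: "Fb \<subseteq> span Bn"
  proof
    fix f assume f: "f \<in> Fb"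
    show "f \<in> span Bn"
    proof (cases "f \<in> g ` X")
      case True then show ?thesis using span1 by blast
    next
      case False then have "f \<in> Bn" unfolding Bn_def U2_def using f by blast
      then show ?thesis by (rule span_base)
    qed
  qed
  have "X \<union> T ` X \<subseteq> span Bn" using span1 by blast
  then have WB: "WW \<subseteq> span Bn" using WX span_minimal[of "X \<union> T ` X" "span Bn"] subspace_span
    by (metis span_span span_mono subset_trans)
  have FB: "FF \<subseteq> span Bn" using Fb(3) FbB
    by (metis span_span span_mono subset_trans)
  have SB: "S \<subseteq> span Bn"
  proof
    fix v assume v: "v \<in> S"
    have "PP v \<in> span Bn" "QQ v \<in> span Bn" using PP_FF[OF v] QQ_WW[OF v] FB WB by auto
    then have "PP v + QQ v \<in> span Bn" by (rule span_add)
    then show "v \<in> span Bn" using PQ[of v] by simp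
  qed
  have spanBn: "span Bn = S" using SB span_minimal[OF BnS subS] by blast
  have indBn: "independent Bn" using card_le_dim_spanning[OF BnS SB finBn cBn] .
  have TBn: "T b \<in> Bn" if b: "b \<in> Bn" for b
  proof (cases "b \<in> U1")
    case True
    then obtain x where x: "x \<in> X" and y: "b = g x + x \<or> b = g x + T x \<or> b = g x + T (T x)"
      unfolding U1_def by blast
    have "T (T (T x)) = x" using T3 xS x by blast
    then have "T b = g x + T x \<or> T b = g x + T (T x) \<or> T b = g x + x"
      using y gT[OF x] by (auto simp: Tlin)
    then show ?thesis unfolding Bn_def U1_def using x by blast
  next
    case False
    then have "b \<in> Fb" using b unfolding Bn_def U2_def by blast
    then have "T b = b" using Fb(1) unfolding FF_def by blast
    then show ?thesis using b by simp
  qed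
  have inv: "\<forall>k<(3::nat). \<forall>b\<in>Bn. (T ^^ k) b \<in> Bn \<union> uminus ` Bn"
  proof (intro allI impI ballI)
    fix k :: nat and b assume k: "k < 3" and b: "b \<in> Bn"
    then have "k = 0 \<or> k = 1 \<or> k = 2" by linarith
    moreover have "(T ^^ 0) b \<in> Bn" using b by simp
    moreover have "(T ^^ 1) b \<in> Bn" using TBn[OF b] by simp
    moreover have "(T ^^ 2) b \<in> Bn" using TBn[OF TBn[OF b]] by (simp add: numeral_2_eq_2)
    ultimately show "(T ^^ k) b \<in> Bn \<union> uminus ` Bn" by blast
  qed
  show ?thesis unfolding Z3_inv_basis_up_to_sign_def
    by (intro exI[of _ Bn] conjI BnS indBn spanBn inv)
qed

lemma dim_from_basis:
  assumes Z: "Z3_inv_basis_up_to_sign S T"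
  shows "dim S \<le> 3 * dim FF"
proof -
  obtain B where B: "B \<subseteq> S" "independent B" "span B = S"
    and inv: "\<forall>k<(3::nat). \<forall>b\<in>B. (T ^^ k) b \<in> B \<union> uminus ` B"
    using Z unfolding Z3_inv_basis_up_to_sign_def by blast
  have finB: "finite B" using B(2) finiteI_independent by blast
  have cB: "card B = dim S" using dim_span_eq_card_independent[OF B(2)] B(3) by simp
  have TB: "b \<in> B \<Longrightarrow> T b \<in> B \<or> - T b \<in> B" for b
  proof -
    assume b: "b \<in> B"
    have "(T ^^ 1) b \<in> B \<union> uminus ` B" using inv b less_numeral_extra(1) by (metis one_less_numeral_iff semiring_norm(77))
    then show ?thesis by auto
  qed
  have B0: "0 \<notin> B" using B(2) dependent_zero by blast
  have negB: "b \<in> B \<Longrightarrow> - b \<notin> B" for b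
  proof
    assume b: "b \<in> B" and nb: "- b \<in> B"
    have "b \<noteq> - b" using b B0 neg_self by metis
    then have "b \<in> B - {- b}" using b by blast
    then have "- b \<in> span (B - {- b})" by (intro span_neg span_base)
    then have "dependent B" unfolding dependent_def using nb by blast
    then show False using B(2) by blast
  qed
  define tau where "tau b = (if T b \<in> B then T b else - T b)" for b
  have tauB: "b \<in> B \<Longrightarrow> tau b \<in> B" for b using TB unfolding tau_def by auto
  have tauT: "b \<in> B \<Longrightarrow> T b = tau b \<or> T b = - tau b" for b unfolding tau_def by auto
  have bS: "b \<in> B \<Longrightarrow> b \<in> S" for b using B(1) by blast
  have tau3: "b \<in> B \<Longrightarrow> tau (tau (tau b)) = b" for b
  proof -
    assume b: "b \<in> B"
    define b1 where "b1 = tau b"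
    define b2 where "b2 = tau b1"
    define b3 where "b3 = tau b2"
    have bb: "b1 \<in> B" "b2 \<in> B" "b3 \<in> B" unfolding b1_def b2_def b3_def using tauB b by blast+
    have e: "T b = b1 \<or> T b = - b1" "T b1 = b2 \<or> T b1 = - b2" "T b2 = b3 \<or> T b2 = - b3"
      using tauT[OF b] tauT[OF bb(1)] tauT[OF bb(2)] unfolding b1_def b2_def b3_def by auto
    have "T (T (T b)) = b3 \<or> T (T (T b)) = - b3" using e by (auto simp: Tlin)
    then have "b = b3 \<or> b = - b3" using T3 bS[OF b] by simp
    then have "b3 = b" using negB[OF b] bb(3) by auto
    then show ?thesis unfolding b3_def b2_def b1_def .
  qed
  have taufix: "b \<in> B \<Longrightarrow> tau b = b \<Longrightarrow> T b = b" for b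
  proof -
    assume b: "b \<in> B" and tb: "tau b = b"
    show "T b = b"
    proof (rule ccontr)
      assume "T b \<noteq> b"
      then have "T b = - b" using tauT[OF b] tb by auto
      then have "T (T (T b)) = - b" by (simp add: Tlin)
      then have "b = - b" using T3 bS[OF b] by simp
      then show False using b B0 neg_self by metis
    qed
  qed
  define B1 where "B1 = {b\<in>B. T b \<noteq> b}"
  have tauB1: "tau ` B1 \<subseteq> B1"
  proof
    fix y assume "y \<in> tau ` B1"
    then obtain b where b: "b \<in> B1" "y = tau b" by blast
    have bB: "b \<in> B" using b unfolding B1_def by blast
    have "T (tau b) \<noteq> tau b"
    proof
      assume h: "T (tau b) = tau b"
      have tfix: "x \<in> B \<Longrightarrow> T x = x \<Longrightarrow> tau x = x" for x unfolding tau_def by simp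
      have "tau (tau b) = tau b" using tfix[OF tauB[OF bB] h] .
      then have "tau (tau (tau b)) = tau b" by simp
      then have "tau b = b" using tau3[OF bB] by simp
      then show False using taufix[OF bB] b(1) unfolding B1_def by blast
    qed
    then show "y \<in> B1" using b tauB[OF bB] unfolding B1_def by blast
  qed
  have finB1: "finite B1" using finB unfolding B1_def by simp
  obtain R where R: "R \<subseteq> B1" "B1 \<subseteq> R \<union> tau ` R \<union> tau ` tau ` R" "3 * card R \<le> card B1"
    using orbit_reps[OF finB1 tauB1, of "card B1"] tau3 taufix unfolding B1_def by auto
  have finR: "finite R" using R(1) finB1 finite_subset by blast
  have RB: "r \<in> R \<Longrightarrow> r \<in> B" for r using R(1) unfolding B1_def by blast
  let ?G = "QQ ` (R \<union> tau ` R)"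
  have QB: "QQ b \<in> span ?G" if b: "b \<in> B" for b
  proof (cases "T b = b")
    case True
    have "PP b = (1/3) *\<^sub>R (b + b + b)" unfolding PP_def using True by simp
    also have "\<dots> = b" unfolding three by simp
    finally have "PP b = b" .
    then have "QQ b = 0" unfolding QQ_def by simp
    then show ?thesis by (simp add: span_zero)
  next
    case False
    then have "b \<in> B1" using b unfolding B1_def by blast
    then obtain r where r: "r \<in> R" and br: "b = r \<or> b = tau r \<or> b = tau (tau r)" using R(2) by blast
    have rB: "r \<in> B" using RB[OF r] .
    have q1: "QQ r \<in> span ?G" "QQ (tau r) \<in> span ?G" using r by (auto intro: span_base)
    have QQneg: "QQ (- x) = - QQ x" for x using linQQ by (simp add: linear_neg)
    have QQadd: "QQ (x + y) = QQ x + QQ y" for x y using linQQ by (simp add: linear_add)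
    have q2: "QQ (T r) \<in> span ?G" using tauT[OF rB] q1(2) QQneg by (metis span_neg)
    have "QQ (T (T r)) = - QQ r - QQ (T r)" using QQ_orbit[OF bS[OF rB]]
      by (simp add: algebra_simps eq_neg_iff_add_eq_0)
    then have q3: "QQ (T (T r)) \<in> span ?G" using q1(1) q2 by (metis span_diff span_neg)
    have "T (T r) = tau (tau r) \<or> T (T r) = - tau (tau r)"
      using tauT[OF rB] tauT[OF tauB[OF rB]] by (auto simp: Tlin)
    then have "tau (tau r) = T (T r) \<or> tau (tau r) = - T (T r)" by auto
    then have q4: "QQ (tau (tau r)) \<in> span ?G" using q3 QQneg by (metis span_neg)
    show ?thesis using br q1 q4 by auto
  qed
  have WG: "WW \<subseteq> span ?G"
  proof
    fix w assume w: "w \<in> WW"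
    then have "w \<in> span B" using B(3) WW_S by blast
    then have "QQ w \<in> QQ ` span B" by blast
    then have "QQ w \<in> span (QQ ` B)" using span_linear_image[OF linQQ] by blast
    moreover have "span (QQ ` B) \<subseteq> span ?G" using QB span_minimal[of "QQ ` B" "span ?G"] subspace_span
      by blast
    ultimately show "w \<in> span ?G" using QQ_fix[OF w] by auto
  qed
  have "dim WW \<le> card ?G" using dim_le_card[OF WG] finR by simp
  also have "\<dots> \<le> card (R \<union> tau ` R)" using finR by (simp add: card_image_le)
  also have "\<dots> \<le> card R + card (tau ` R)" by (rule card_Un_le)
  also have "\<dots> \<le> 2 * card R" using card_image_le[OF finR, of tau] by simp
  finally have dW: "dim WW \<le> 2 * card R" .
  have "card B1 \<le> card B" using finB unfolding B1_def by (simp add: card_mono)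
  then show ?thesis using dW R(3) cB dimFW by linarith
qed

end

lemma dim_supp:
  fixes J :: "'m::finite set"
  defines "Z \<equiv> {x::'a::euclidean_space^'m. \<forall>j. j \<notin> J \<longrightarrow> x $ j = 0}"
  shows "subspace Z" "dim Z = card J * DIM('a)"
proof -
  show sZ: "subspace Z" unfolding Z_def subspace_def by auto
  define E where "E = (\<lambda>(j, u). axis j u :: 'a^'m) ` (J \<times> Basis)"
  have EB: "E \<subseteq> Basis" unfolding E_def Basis_vec_def by auto
  have indE: "independent E" using independent_mono[OF independent_Basis EB] .
  have EZ: "E \<subseteq> Z" unfolding E_def Z_def by (auto simp: axis_def)
  have ZE: "Z \<subseteq> span E"
  proof
    fix x assume x: "x \<in> Z"
    have "(\<Sum>b\<in>Basis. (x \<bullet> b) *\<^sub>R b) \<in> span E"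
    proof (rule span_sum)
      fix b :: "'a^'m" assume b: "b \<in> Basis"
      then obtain j u where u: "u \<in> Basis" and bj: "b = axis j u" unfolding Basis_vec_def by auto
      show "(x \<bullet> b) *\<^sub>R b \<in> span E"
      proof (cases "j \<in> J")
        case True
        then have "b \<in> E" unfolding E_def bj using u by auto
        then show ?thesis by (intro span_scale span_base)
      next
        case False
        then have "x \<bullet> b = 0" using x unfolding Z_def bj by (simp add: inner_axis)
        then show ?thesis by (simp add: span_zero)
      qed
    qed
    then show "x \<in> span E" by (simp add: euclidean_representation)
  qed
  have spE: "span E = Z" using span_minimal[OF EZ sZ] ZE by blast
  have "inj_on (\<lambda>(j, u). axis j u :: 'a^'m) (J \<times> Basis)"
    by (auto simp: inj_on_def axis_eq_axis nonzero_Basis)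
  then have "card E = card J * DIM('a)" unfolding E_def by (simp add: card_image card_cartesian_product)
  then show "dim Z = card J * DIM('a)" using dim_span_eq_card_independent[OF indE] spE by simp
qed

lemma cyc3_3: "cyc3 (cyc3 (cyc3 y)) = y"
proof -
  have "cyc3 (cyc3 (cyc3 y)) $ i = y $ i" for i
  proof -
    have "cyc3 (cyc3 (cyc3 y)) $ i = y $ (i + 1 + 1 + 1)" by (simp only: cyc3_def vec_lambda_beta)
    moreover have "i + 1 + 1 + 1 = (i::3)" by simp
    ultimately show ?thesis by (simp only:)
  qed
  then show ?thesis by (simp add: vec_eq_iff)
qed

lemma cyc3_lin: "cyc3 (x + y) = cyc3 x + cyc3 y" "cyc3 (c *\<^sub>R x) = c *\<^sub>R cyc3 x" "cyc3 0 = 0"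
  unfolding cyc3_def by (simp_all add: vec_eq_iff)

lemma cyc3_fix: "cyc3 y = y \<longleftrightarrow> (\<forall>i. y $ i = y $ 1)"
proof
  assume h: "cyc3 y = y"
  then have s: "y $ (i + 1) = y $ i" for i unfolding cyc3_def vec_eq_iff by auto
  have "y $ 2 = y $ 1" using s[of 1] by simp
  moreover have "y $ 3 = y $ 1" using s[of 2] calculation by simp
  ultimately show "\<forall>i. y $ i = y $ 1" by (simp add: forall_3)
next
  assume h: "\<forall>i. y $ i = y $ 1"
  have "y $ (i + 1) = y $ i" for i using h by metis
  then show "cyc3 y = y" unfolding cyc3_def by (simp add: vec_eq_iff)
qed

theorem corollary2p22:
  fixes T :: "'v::euclidean_space \<Rightarrow> 'v" and J :: "'m::finite set" and n :: nat
  assumes "linear T" and "T \<circ> T \<circ> T = id" and "card J = n"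
  shows "Z3_inv_basis_up_to_sign (UNIV :: 'v set) T \<longleftrightarrow>
         Z3_inv_basis_up_to_sign (UNIV \<times> reg_copies J) (sum_action T)"
proof -
  have T3: "T (T (T v)) = v" for v using assms(2) by (metis comp_apply id_apply)
  interpret V: z3rep "UNIV :: 'v set" T
    by (rule z3rep.intro) (simp_all add: assms(1) T3)
  have regZ: "reg_copies J = {x::real^3^'m. \<forall>j. j \<notin> J \<longrightarrow> x $ j = 0}" unfolding reg_copies_def ..
  have sreg: "subspace (reg_copies J)" and dreg: "dim (reg_copies J) = 3 * n"
    using dim_supp[where 'a="real^3" and J=J] assms(3) unfolding regZ by auto
  have linS: "linear (sum_action T)"
    by (intro linearI) (simp_all add: sum_action_def prod_eq_iff vec_eq_iff cyc3_lin linear_add[OF assms(1)] linear_scale[OF assms(1)])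
  interpret B: z3rep "UNIV \<times> reg_copies J" "sum_action T"
  proof (rule z3rep.intro)
    show "subspace (UNIV \<times> reg_copies J)" using sreg by (simp add: subspace_Times)
    show "linear (sum_action T)" by (rule linS)
    show "sum_action T v \<in> UNIV \<times> reg_copies J" if "v \<in> UNIV \<times> reg_copies J" for v
      using that unfolding sum_action_def reg_copies_def by (auto simp: cyc3_lin)
    show "sum_action T (sum_action T (sum_action T v)) = v" for v
      unfolding sum_action_def by (simp add: T3 cyc3_3 prod_eq_iff vec_eq_iff)
  qed
  define C where "C = {x \<in> reg_copies J. (\<chi> j. cyc3 (x $ j)) = x}"
  define Y where "Y = {y::real^'m. \<forall>j. j \<notin> J \<longrightarrow> y $ j = 0}"
  define L where "L = (\<lambda>y::real^'m. (\<chi> j. (\<chi> i::3. y $ j)) :: real^3^'m)"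
  have sY: "subspace Y" and dY: "dim Y = n" using dim_supp[where 'a=real and J=J] assms(3) unfolding Y_def by auto
  have linL: "linear L" unfolding L_def by (intro linearI) (simp_all add: vec_eq_iff)
  have injL: "inj L" unfolding L_def inj_on_def by (auto simp: vec_eq_iff)
  have CL: "C = L ` Y"
  proof
    show "L ` Y \<subseteq> C"
      unfolding C_def L_def Y_def reg_copies_def by (auto simp: vec_eq_iff cyc3_def)
    show "C \<subseteq> L ` Y"
    proof
      fix x assume x: "x \<in> C"
      then have xr: "\<forall>j. j \<notin> J \<longrightarrow> x $ j = 0" and xc: "\<And>j. cyc3 (x $ j) = x $ j"
        unfolding C_def reg_copies_def vec_eq_iff by auto
      have "x = L (\<chi> j. x $ j $ 1)"
        using xc unfolding L_def cyc3_fix by (simp add: vec_eq_iff)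
      moreover have "(\<chi> j. x $ j $ 1) \<in> Y" unfolding Y_def using xr by simp
      ultimately show "x \<in> L ` Y" by blast
    qed
  qed
  have sC: "subspace C" unfolding CL using linear_subspace_image[OF linL sY] .
  have dC: "dim C = n" unfolding CL using dim_image_eq[OF linL] injL dY by (metis inj_on_subset subset_UNIV)
  have FF: "B.FF = V.FF \<times> C"
    unfolding B.FF_def V.FF_def C_def sum_action_def by (auto simp: prod_eq_iff)
  have dF: "dim B.FF = dim V.FF + n" unfolding FF using dim_Times[OF V.subFF sC] dC by simp
  have dS: "dim ((UNIV :: 'v set) \<times> reg_copies J) = dim (UNIV :: 'v set) + 3 * n"
  proof -
    have "dim ((UNIV :: 'v set) \<times> reg_copies J) = dim (UNIV :: 'v set) + dim (reg_copies J)"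
      using dim_Times[of "UNIV::'v set" "reg_copies J"] sreg by simp
    then show ?thesis using dreg by simp
  qed
  show ?thesis
  proof
    assume "Z3_inv_basis_up_to_sign (UNIV :: 'v set) T"
    then have "dim (UNIV :: 'v set) \<le> 3 * dim V.FF" by (rule V.dim_from_basis)
    then show "Z3_inv_basis_up_to_sign (UNIV \<times> reg_copies J) (sum_action T)"
      using dF dS by (intro B.basis_from_dim) simp
  next
    assume "Z3_inv_basis_up_to_sign (UNIV \<times> reg_copies J) (sum_action T)"
    then have "dim ((UNIV :: 'v set) \<times> reg_copies J) \<le> 3 * dim B.FF" by (rule B.dim_from_basis)
    then show "Z3_inv_basis_up_to_sign (UNIV :: 'v set) T"
      using dF dS by (intro V.basis_from_dim) simp
  qed
qed
end
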